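(* Let $h>0$, $\alpha>2$, $\beta\ge0$, $c>0$, let $V$ satisfy $\sup_t|v_k(t)|\le c_v e^{-\beta|k|}\langle k\rangle^{-\alpha}$ for all $k$, and let $\mathcal{N}$ be a unitary operator on $l^2(\mathbb{Z})$ satisfying, for all $j,k\in\mathbb{Z}$, $$\Big|\mathcal{N}_{jk}-\delta_{jk}e^{\frac{2\pi}{ih}k^2}-\delta_{-j,k}\frac{e^{\frac{2\pi}{ih}k^2}}{ih}\int_0^{2\pi}v_{-2k}(\tau)\,d\tau\Big|\le\frac{c\,e^{-\beta|j-k|}}{\langle j\rangle\langle k\rangle\langle j-k\rangle^{\alpha-1}}.$$ Then there is a constant $c_w$ depending only on $c,c_v,h,\alpha$ such that for every sufficiently large $N$ there exists a unitary $(2N+1)\times(2N+1)$ matrix $U=(u_{jk})_{-N\le j,k\le N}$ with $$|u_{jk}-\mathcal{N}_{jk}|\le\frac{c_w e^{-\beta|j-k|}}{\langle j\rangle\langle k\rangle(N+1)^2\langle j-k\rangle^{\alpha-1}},\qquad -N\le j,k\le N.$$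
   Context: $V(x,t)=\sum_{k\in\mathbb{Z}}v_k(t)e^{ikx}$ is real-valued and $2\pi$-periodic in $t$ with $v_0\equiv0$; $h>0$; $\langle k\rangle=|k|+1$; $\delta$ is the Kronecker delta; $e^{\frac{t}{ih}k^2}=e^{-itk^2/h}$. *)

theory Defs
  imports "HOL-Analysis.Analysis"
begin

text \<open>Japanese bracket: langle k = |k| + 1.\<close>
definition jbr :: "int \<Rightarrow> real" where
  "jbr k = real_of_int \<bar>k\<bar> + 1"

definition potential :: "(int \<Rightarrow> real \<Rightarrow> complex) \<Rightarrow> real \<Rightarrow> real \<Rightarrow> complex" where
  "potential v x t = (\<Sum>\<^sub>\<infinity>k\<in>UNIV. v k t * exp (\<i> * of_int k * of_real x))"

definition is_l2 :: "(int \<Rightarrow> complex) \<Rightarrow> bool" where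
  "is_l2 x \<longleftrightarrow> (\<lambda>k. (cmod (x k))\<^sup>2) summable_on UNIV"

definition l2_norm_sq :: "(int \<Rightarrow> complex) \<Rightarrow> real" where
  "l2_norm_sq x = (\<Sum>\<^sub>\<infinity>k\<in>UNIV. (cmod (x k))\<^sup>2)"

definition mat_apply :: "(int \<Rightarrow> int \<Rightarrow> complex) \<Rightarrow> (int \<Rightarrow> complex) \<Rightarrow> int \<Rightarrow> complex" where
  "mat_apply M x j = (\<Sum>\<^sub>\<infinity>k\<in>UNIV. M j k * x k)"

definition unitary_l2 :: "(int \<Rightarrow> int \<Rightarrow> complex) \<Rightarrow> bool" where
  "unitary_l2 M \<longleftrightarrow>
     (\<forall>x. is_l2 x \<longrightarrow>
        (\<forall>j. (\<lambda>k. M j k * x k) summable_on UNIV) \<and>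
        is_l2 (mat_apply M x) \<and>
        l2_norm_sq (mat_apply M x) = l2_norm_sq x) \<and>
     (\<forall>y. is_l2 y \<longrightarrow> (\<exists>x. is_l2 x \<and> mat_apply M x = y))"

definition unitary_fin :: "nat \<Rightarrow> (int \<Rightarrow> int \<Rightarrow> complex) \<Rightarrow> bool" where
  "unitary_fin N U \<longleftrightarrow>
     (\<forall>j\<in>{-int N..int N}. \<forall>l\<in>{-int N..int N}.
        (\<Sum>k\<in>{-int N..int N}. U j k * cnj (U l k)) = (if j = l then 1 else 0) \<and>
        (\<Sum>k\<in>{-int N..int N}. cnj (U k j) * U k l) = (if j = l then 1 else 0))"

end

theory Submission
  imports Defs "HOL-Computational_Algebra.Formal_Power_Series" "Jordan_Normal_Form.Determinant"
begin

definition mm :: "'a set \<Rightarrow> ('a \<Rightarrow> 'a \<Rightarrow> complex) \<Rightarrow> ('a \<Rightarrow> 'a \<Rightarrow> complex) \<Rightarrow> 'a \<Rightarrow> 'a \<Rightarrow> complex" where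
  "mm I F G = (\<lambda>j k. \<Sum>l\<in>I. F j l * G l k)"

definition idm :: "'a \<Rightarrow> 'a \<Rightarrow> complex" where
  "idm j k = (if j = k then 1 else 0)"

fun mpow :: "'a set \<Rightarrow> ('a \<Rightarrow> 'a \<Rightarrow> complex) \<Rightarrow> nat \<Rightarrow> 'a \<Rightarrow> 'a \<Rightarrow> complex" where
  "mpow I E 0 = idm"
| "mpow I E (Suc n) = mm I (mpow I E n) E"

lemma mm_assoc: "finite I \<Longrightarrow> mm I (mm I F G) H = mm I F (mm I G H)"
  unfolding mm_def
  by (auto simp: sum_distrib_left sum_distrib_right mult.assoc intro!: ext sum.swap)

lemma mm_idm_left: "j \<in> I \<Longrightarrow> finite I \<Longrightarrow> mm I idm F j k = F j k"
proof -
  assume a: "j \<in> I" "finite I"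
  have "mm I idm F j k = (\<Sum>l\<in>I. if j = l then F l k else 0)"
    unfolding mm_def idm_def by (rule sum.cong) auto
  also have "\<dots> = F j k" using a by (simp add: sum.delta)
  finally show ?thesis .
qed

lemma mm_idm_right: "k \<in> I \<Longrightarrow> finite I \<Longrightarrow> mm I F idm j k = F j k"
proof -
  assume a: "k \<in> I" "finite I"
  have "mm I F idm j k = (\<Sum>l\<in>I. if l = k then F j l else 0)"
    unfolding mm_def idm_def by (rule sum.cong) auto
  also have "\<dots> = F j k" using a by (simp add: sum.delta')
  finally show ?thesis .
qed

lemma mm_cong: "(\<And>l. l \<in> I \<Longrightarrow> F j l = F' j l) \<Longrightarrow> (\<And>l. l \<in> I \<Longrightarrow> G l k = G' l k)
   \<Longrightarrow> mm I F G j k = mm I F' G' j k"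
  unfolding mm_def by (auto intro!: sum.cong)

lemma mpow_add: assumes "finite I" "j \<in> I" "k \<in> I"
  shows "mpow I E (m + n) j k = mm I (mpow I E m) (mpow I E n) j k"
  using assms(3)
proof (induction n arbitrary: k)
  case 0 then show ?case using assms by (simp add: mm_idm_right)
next
  case (Suc n)
  have "mpow I E (m + Suc n) j k = mm I (mpow I E (m+n)) E j k" by simp
  also have "\<dots> = mm I (mm I (mpow I E m) (mpow I E n)) E j k"
    by (rule mm_cong) (auto intro: Suc.IH)
  also have "\<dots> = mm I (mpow I E m) (mpow I E (Suc n)) j k"
    using mm_assoc[OF assms(1)] by simp
  finally show ?case .
qed

lemma mpow_Suc': assumes "finite I" "j \<in> I" "k \<in> I"
  shows "mpow I E (Suc n) j k = mm I E (mpow I E n) j k"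
proof -
  have "mpow I E (Suc n) j k = mpow I E (1 + n) j k" by simp
  also have "\<dots> = mm I (mpow I E 1) (mpow I E n) j k" by (rule mpow_add[OF assms])
  also have "\<dots> = mm I E (mpow I E n) j k"
    by (rule mm_cong) (use assms in \<open>auto simp: mm_idm_left\<close>)
  finally show ?thesis .
qed

lemma mpow_herm: assumes "finite I" "\<And>j k. j \<in> I \<Longrightarrow> k \<in> I \<Longrightarrow> cnj (E j k) = E k j"
  shows "j \<in> I \<Longrightarrow> k \<in> I \<Longrightarrow> cnj (mpow I E n j k) = mpow I E n k j"
proof (induction n arbitrary: j k)
  case 0 then show ?case by (auto simp: idm_def)
next
  case (Suc n)
  have "cnj (mpow I E (Suc n) j k) = (\<Sum>l\<in>I. cnj (mpow I E n j l) * cnj (E l k))"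
    by (simp add: mm_def)
  also have "\<dots> = (\<Sum>l\<in>I. E k l * mpow I E n l j)"
    using Suc by (auto intro!: sum.cong simp: assms(2) mult.commute)
  also have "\<dots> = mpow I E (Suc n) k j"
    using mpow_Suc'[OF assms(1) Suc.prems(2,1)] by (simp add: mm_def)
  finally show ?case .
qed

definition bco :: "nat \<Rightarrow> real" where "bco n = (-1)^n * ((-1/2) gchoose n)"

lemma bco_0: "bco 0 = 1" by (simp add: bco_def)

lemma bco_Suc: "bco (Suc n) = bco n * ((real n + 1/2) / (real n + 1))"
proof -
  define g where "g = (-1/2::real) gchoose n"
  define g' where "g' = (-1/2::real) gchoose (Suc n)"
  have "(-1/2::real) * ((-1/2) gchoose n) = real n * ((-1/2) gchoose n) + real (Suc n) * ((-1/2) gchoose (Suc n))"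
    by (rule gbinomial_mult_1)
  hence h: "(-1/2) * g = real n * g + (real n + 1) * g'" unfolding g_def g'_def by simp
  have h2: "g' = - g * (real n + 1/2) / (real n + 1)"
  proof -
    have "(real n + 1) * g' = - g * (real n + 1/2)" using h by (simp add: algebra_simps)
    thus ?thesis by (simp add: field_simps)
  qed
  have "bco (Suc n) = (-1)^n * (-1) * g'" unfolding bco_def g'_def by simp
  also have "\<dots> = ((-1)^n * g) * ((real n + 1/2) / (real n + 1))" unfolding h2 by simp
  also have "\<dots> = bco n * ((real n + 1/2) / (real n + 1))" unfolding bco_def g_def by simp
  finally show ?thesis .
qed

lemma bco_bound: "0 \<le> bco n \<and> bco n \<le> 1"
proof (induction n)
  case 0 then show ?case by (simp add: bco_0)
next
  case (Suc n)
  have "0 \<le> (real n + 1/2) / (real n + 1)" "(real n + 1/2) / (real n + 1) \<le> 1" by auto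
  have "bco n * (real n + 1/2) \<le> 1 * (real n + 1/2)" using Suc by (intro mult_right_mono) auto
  then show ?case using Suc by (simp add: bco_Suc field_simps del: of_nat_Suc)
qed

lemma bco_conv: "(\<Sum>i\<le>p. bco i * bco (p - i)) = 1"
proof -
  have "fps_binomial (-1/2 + -1/2 :: real) = fps_binomial (-1/2) * fps_binomial (-1/2)"
    by (rule fps_binomial_add_mult)
  hence "fps_nth (fps_binomial (-1/2) * fps_binomial (-1/2 :: real)) p = fps_nth (fps_binomial (-1)) p" by simp
  hence e: "(\<Sum>i=0..p. ((-1/2::real) gchoose i) * ((-1/2) gchoose (p - i))) = (-1) gchoose p"
    by (simp add: fps_mult_nth)
  have m1: "((-1::real) gchoose p) = (-1)^p"
    using gbinomial_minus[of "1::real" p] binomial_gbinomial[of p p, where 'a=real] by simp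
  have "(\<Sum>i\<le>p. bco i * bco (p - i)) = (\<Sum>i=0..p. (-1)^p * (((-1/2::real) gchoose i) * ((-1/2) gchoose (p - i))))"
    unfolding bco_def atMost_atLeast0
    by (rule sum.cong) (auto simp: power_add[symmetric])
  also have "\<dots> = (-1)^p * (\<Sum>i=0..p. (((-1/2::real) gchoose i) * ((-1/2) gchoose (p - i))))"
    by (rule sum_distrib_left[symmetric])
  also have "\<dots> = (-1)^p * (-1)^p" by (simp only: e m1)
  also have "\<dots> = 1" by (simp add: power_mult_distrib[symmetric])
  finally show ?thesis .
qed

locale core =
  fixes I :: "'a set" and E :: "'a \<Rightarrow> 'a \<Rightarrow> complex" and w :: "'a \<Rightarrow> 'a \<Rightarrow> real" and K \<epsilon> :: real
  assumes fin: "finite I"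
    and herm: "\<And>j k. j \<in> I \<Longrightarrow> k \<in> I \<Longrightarrow> cnj (E j k) = E k j"
    and w_nn: "\<And>j k. 0 \<le> w j k"
    and w_le1: "\<And>j k. j \<in> I \<Longrightarrow> k \<in> I \<Longrightarrow> w j k \<le> 1"
    and w_prod: "\<And>j k. j \<in> I \<Longrightarrow> k \<in> I \<Longrightarrow> (\<Sum>l\<in>I. w j l * w l k) \<le> K * w j k"
    and K1: "1 \<le> K" and eps0: "0 \<le> \<epsilon>" and epsK: "K * \<epsilon> \<le> 1/2"
    and Ebd: "\<And>j k. j \<in> I \<Longrightarrow> k \<in> I \<Longrightarrow> cmod (E j k) \<le> \<epsilon> * w j k"
begin

abbreviation "P \<equiv> mpow I E"

lemma eps_half: "\<epsilon> \<le> 1/2"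
  using mult_right_mono[OF K1 eps0] epsK by simp

lemma pb1: "j \<in> I \<Longrightarrow> k \<in> I \<Longrightarrow> cmod (P (Suc n) j k) \<le> \<epsilon> * (1/2)^n * w j k"
proof (induction n arbitrary: k)
  case 0
  then show ?case using Ebd[of j k] by (simp add: mm_idm_left fin)
next
  case (Suc n)
  have "cmod (P (Suc (Suc n)) j k) = cmod (\<Sum>l\<in>I. P (Suc n) j l * E l k)" by (simp add: mm_def)
  also have "\<dots> \<le> (\<Sum>l\<in>I. cmod (P (Suc n) j l) * cmod (E l k))"
    by (rule order_trans[OF norm_sum]) (simp add: norm_mult)
  also have "\<dots> \<le> (\<Sum>l\<in>I. (\<epsilon> * (1/2)^n * w j l) * (\<epsilon> * w l k))"
  proof (rule sum_mono)
    fix l assume l: "l \<in> I"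
    show "cmod (P (Suc n) j l) * cmod (E l k) \<le> \<epsilon> * (1/2)^n * w j l * (\<epsilon> * w l k)"
      by (rule mult_mono[OF Suc.IH[OF Suc.prems(1) l] Ebd[OF l Suc.prems(2)]]) (use eps0 w_nn in simp_all)
  qed
  also have "\<dots> = \<epsilon> * (1/2)^n * \<epsilon> * (\<Sum>l\<in>I. w j l * w l k)"
    by (simp add: sum_distrib_left mult_ac)
  also have "\<dots> \<le> \<epsilon> * (1/2)^n * \<epsilon> * (K * w j k)"
    using Suc eps0 by (intro mult_left_mono w_prod) auto
  also have "\<dots> = \<epsilon> * (1/2)^n * (K * \<epsilon>) * w j k" by (simp add: mult_ac)
  also have "\<dots> \<le> \<epsilon> * (1/2)^n * (1/2) * w j k"
    using eps0 epsK w_nn by (intro mult_right_mono mult_left_mono) auto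
  finally show ?case by simp
qed

lemma pb0: "j \<in> I \<Longrightarrow> k \<in> I \<Longrightarrow> cmod (P n j k) \<le> (1/2)^n"
proof (cases n)
  case 0 then show ?thesis by (simp add: idm_def)
next
  case (Suc m)
  assume jk: "j \<in> I" "k \<in> I"
  have "cmod (P n j k) \<le> \<epsilon> * (1/2)^m * w j k" using pb1 jk Suc by simp
  also have "\<dots> \<le> (1/2) * (1/2)^m * 1"
    using eps_half eps0 w_le1[OF jk] w_nn by (intro mult_mono) auto
  finally show ?thesis using Suc by simp
qed

lemma summ_norm: assumes "j \<in> I" "k \<in> I"
  shows "summable (\<lambda>n. norm (complex_of_real (bco n) * P n j k))"
proof (rule summable_comparison_test)
  show "summable (\<lambda>n. (1/2::real)^n)" by (rule summable_geometric) simp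
  show "\<exists>N. \<forall>n\<ge>N. norm (norm (complex_of_real (bco n) * P n j k)) \<le> (1/2)^n"
  proof (intro exI allI impI)
    fix n :: nat
    have "norm (norm (complex_of_real (bco n) * P n j k)) = \<bar>bco n\<bar> * cmod (P n j k)"
      by (simp add: norm_mult)
    also have "\<dots> \<le> 1 * (1/2)^n"
      by (rule mult_mono) (use bco_bound[of n] pb0[OF assms] in auto)
    finally show "norm (norm (complex_of_real (bco n) * P n j k)) \<le> (1/2)^n" by simp
  qed
qed

lemma summ: "j \<in> I \<Longrightarrow> k \<in> I \<Longrightarrow> summable (\<lambda>n. complex_of_real (bco n) * P n j k)"
  by (rule summable_norm_cancel[OF summ_norm])

definition S :: "'a \<Rightarrow> 'a \<Rightarrow> complex" where
  "S j k = (\<Sum>n. complex_of_real (bco n) * P n j k)"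

lemma S_herm: assumes "j \<in> I" "k \<in> I" shows "cnj (S j k) = S k j"
proof -
  have "(\<lambda>n. cnj (complex_of_real (bco n) * P n j k)) sums cnj (S j k)"
    unfolding sums_cnj S_def using summ[OF assms] by (simp add: summable_sums)
  moreover have "(\<lambda>n. cnj (complex_of_real (bco n) * P n j k)) = (\<lambda>n. complex_of_real (bco n) * P n k j)"
    using mpow_herm[OF fin herm assms] by auto
  ultimately show ?thesis unfolding S_def by (simp add: sums_iff)
qed

lemma S_comm: assumes "j \<in> I" "k \<in> I" shows "mm I S E j k = mm I E S j k"
proof -
  have "mm I S E j k = (\<Sum>l\<in>I. \<Sum>n. complex_of_real (bco n) * P n j l * E l k)"
    unfolding mm_def S_def
  proof (intro sum.cong refl)
    fix l assume "l \<in> I"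
    show "(\<Sum>n. complex_of_real (bco n) * P n j l) * E l k = (\<Sum>n. complex_of_real (bco n) * P n j l * E l k)"
      using suminf_mult2[OF summ[OF assms(1) \<open>l \<in> I\<close>]] .
  qed
  also have "\<dots> = (\<Sum>n. \<Sum>l\<in>I. complex_of_real (bco n) * P n j l * E l k)"
    by (intro suminf_sum[symmetric] summable_mult2 summ assms)
  also have "\<dots> = (\<Sum>n. complex_of_real (bco n) * P (Suc n) j k)"
    by (simp add: mm_def sum_distrib_left mult.assoc)
  also have "\<dots> = (\<Sum>n. \<Sum>l\<in>I. E j l * (complex_of_real (bco n) * P n l k))"
  proof (rule suminf_cong)
    fix n
    have "(\<Sum>l\<in>I. E j l * (complex_of_real (bco n) * P n l k)) = complex_of_real (bco n) * mm I E (P n) j k"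
      unfolding mm_def sum_distrib_left by (rule sum.cong) (auto simp: mult_ac)
    also have "\<dots> = complex_of_real (bco n) * P (Suc n) j k"
      by (simp only: mpow_Suc'[OF fin assms])
    finally show "complex_of_real (bco n) * P (Suc n) j k = (\<Sum>l\<in>I. E j l * (complex_of_real (bco n) * P n l k))" by simp
  qed
  also have "\<dots> = (\<Sum>l\<in>I. \<Sum>n. E j l * (complex_of_real (bco n) * P n l k))"
    by (intro suminf_sum summable_mult summ assms)
  also have "\<dots> = mm I E S j k"
    unfolding mm_def S_def
  proof (intro sum.cong refl)
    fix l assume "l \<in> I"
    show "(\<Sum>n. E j l * (complex_of_real (bco n) * P n l k)) = E j l * (\<Sum>n. complex_of_real (bco n) * P n l k)"
      using suminf_mult[OF summ[OF \<open>l \<in> I\<close> assms(2)]] by simp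
  qed
  finally show ?thesis .
qed

lemma S_sq: assumes "j \<in> I" "k \<in> I" shows "mm I S S j k = (\<Sum>p. P p j k)"
proof -
  have cp: "(\<lambda>p. \<Sum>i\<le>p. (complex_of_real (bco i) * P i j l) * (complex_of_real (bco (p - i)) * P (p - i) l k))
        sums (S j l * S l k)" if l: "l \<in> I" for l
    unfolding S_def by (rule Cauchy_product_sums[OF summ_norm[OF assms(1) l] summ_norm[OF l assms(2)]])
  have "(\<lambda>p. \<Sum>l\<in>I. \<Sum>i\<le>p. (complex_of_real (bco i) * P i j l) * (complex_of_real (bco (p - i)) * P (p - i) l k))
        sums (\<Sum>l\<in>I. S j l * S l k)"
    by (rule sums_sum[OF cp])
  moreover have "(\<Sum>l\<in>I. \<Sum>i\<le>p. (complex_of_real (bco i) * P i j l) * (complex_of_real (bco (p - i)) * P (p - i) l k))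
      = P p j k" for p
  proof -
    have "(\<Sum>l\<in>I. \<Sum>i\<le>p. (complex_of_real (bco i) * P i j l) * (complex_of_real (bco (p - i)) * P (p - i) l k))
        = (\<Sum>i\<le>p. complex_of_real (bco i * bco (p - i)) * mm I (P i) (P (p - i)) j k)"
      unfolding mm_def by (subst sum.swap) (simp add: sum_distrib_left mult_ac)
    also have "\<dots> = (\<Sum>i\<le>p. complex_of_real (bco i * bco (p - i)) * P p j k)"
      by (rule sum.cong) (use mpow_add[OF fin assms, symmetric] in auto)
    also have "\<dots> = complex_of_real (\<Sum>i\<le>p. bco i * bco (p - i)) * P p j k"
      by (simp add: sum_distrib_right)
    also have "\<dots> = P p j k" by (simp only: bco_conv) simp
    finally show ?thesis .
  qed
  ultimately have "(\<lambda>p. P p j k) sums (\<Sum>l\<in>I. S j l * S l k)" by simp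
  thus ?thesis unfolding mm_def by (simp add: sums_iff)
qed

definition G :: "'a \<Rightarrow> 'a \<Rightarrow> complex" where "G j k = (\<Sum>p. P p j k)"

lemma summ_P: assumes "j \<in> I" "k \<in> I" shows "summable (\<lambda>p. P p j k)"
proof (rule summable_comparison_test)
  show "summable (\<lambda>n. (1/2::real)^n)" by (rule summable_geometric) simp
  show "\<exists>N. \<forall>n\<ge>N. norm (P n j k) \<le> (1/2)^n" using pb0[OF assms] by blast
qed

lemma G_inv: assumes "j \<in> I" "k \<in> I" shows "mm I G (\<lambda>j k. idm j k - E j k) j k = idm j k"
proof -
  have "mm I G (\<lambda>j k. idm j k - E j k) j k = mm I G idm j k - mm I G E j k"
    unfolding mm_def by (simp add: right_diff_distrib sum_subtractf)
  also have "mm I G idm j k = G j k" using assms fin by (simp add: mm_idm_right)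
  also have "mm I G E j k = (\<Sum>l\<in>I. \<Sum>p. P p j l * E l k)"
    unfolding mm_def G_def
  proof (intro sum.cong refl)
    fix l assume "l \<in> I"
    show "(\<Sum>p. P p j l) * E l k = (\<Sum>p. P p j l * E l k)"
      using suminf_mult2[OF summ_P[OF assms(1) \<open>l \<in> I\<close>]] .
  qed
  also have "\<dots> = (\<Sum>p. \<Sum>l\<in>I. P p j l * E l k)"
    by (intro suminf_sum[symmetric] summable_mult2 summ_P assms)
  also have "\<dots> = (\<Sum>p. P (Suc p) j k)" by (simp add: mm_def)
  also have "\<dots> = G j k - P 0 j k" unfolding G_def by (rule suminf_split_head[OF summ_P[OF assms]])
  finally show ?thesis by simp
qed

lemma S_bound: assumes "j \<in> I" "k \<in> I" shows "cmod (S j k - idm j k) \<le> 2 * \<epsilon> * w j k"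
proof -
  have "S j k - idm j k = (\<Sum>n. complex_of_real (bco (Suc n)) * P (Suc n) j k)"
    unfolding S_def using suminf_split_head[OF summ[OF assms]] by (simp add: bco_0)
  also have "cmod \<dots> \<le> (\<Sum>n. \<epsilon> * w j k * (1/2)^n)"
  proof (rule norm_suminf_le)
    fix n
    have "cmod (complex_of_real (bco (Suc n)) * P (Suc n) j k) = \<bar>bco (Suc n)\<bar> * cmod (P (Suc n) j k)"
      by (simp add: norm_mult)
    also have "\<dots> \<le> 1 * (\<epsilon> * (1/2)^n * w j k)"
      by (rule mult_mono) (use bco_bound[of "Suc n"] pb1[OF assms] in auto)
    finally show "cmod (complex_of_real (bco (Suc n)) * P (Suc n) j k) \<le> \<epsilon> * w j k * (1/2)^n"
      by (simp add: mult_ac)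
    show "summable (\<lambda>n. \<epsilon> * w j k * (1/2::real)^n)"
      by (intro summable_mult summable_geometric) simp
  qed
  also have "\<dots> = 2 * \<epsilon> * w j k"
    using sums_unique[OF sums_mult[OF geometric_sums[of "1/2::real"], of "\<epsilon> * w j k"]] by simp
  finally show ?thesis .
qed

lemma S_main: assumes "j \<in> I" "k \<in> I"
  shows "mm I (mm I S (\<lambda>j k. idm j k - E j k)) S j k = idm j k"
proof -
  let ?M = "\<lambda>j k. idm j k - E j k"
  have c: "mm I S ?M a b = mm I ?M S a b" if "a \<in> I" "b \<in> I" for a b
  proof -
    have "mm I S ?M a b = mm I S idm a b - mm I S E a b"
      unfolding mm_def by (simp add: right_diff_distrib sum_subtractf)
    also have "\<dots> = mm I idm S a b - mm I E S a b"
      using that fin by (simp add: mm_idm_right mm_idm_left S_comm)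
    also have "\<dots> = mm I ?M S a b"
      unfolding mm_def by (simp add: left_diff_distrib sum_subtractf)
    finally show ?thesis .
  qed
  have "mm I (mm I S ?M) S j k = mm I S (mm I ?M S) j k" by (simp add: mm_assoc[OF fin])
  also have "\<dots> = mm I S (mm I S ?M) j k" by (rule mm_cong) (use c assms in auto)
  also have "\<dots> = mm I (mm I S S) ?M j k" by (simp add: mm_assoc[OF fin])
  also have "\<dots> = mm I G ?M j k" by (rule mm_cong) (use S_sq assms in \<open>auto simp: G_def\<close>)
  also have "\<dots> = idm j k" by (rule G_inv[OF assms])
  finally show ?thesis .
qed

lemma U_unit: assumes AA: "\<And>j k. j \<in> I \<Longrightarrow> k \<in> I \<Longrightarrow> (\<Sum>l\<in>I. cnj (A l j) * A l k) = idm j k - E j k"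
  and jk: "j \<in> I" "k \<in> I"
  shows "(\<Sum>l\<in>I. cnj (mm I A S l j) * mm I A S l k) = idm j k"
proof -
  let ?M = "\<lambda>j k. idm j k - E j k"
  let ?cA = "\<lambda>a b. cnj (A b a)"
  have ct: "cnj (mm I A S l j) = mm I S ?cA j l" for l
    unfolding mm_def using S_herm[OF _ jk(1)] by (auto intro!: sum.cong simp: mult.commute)
  have "(\<Sum>l\<in>I. cnj (mm I A S l j) * mm I A S l k) = mm I (mm I S ?cA) (mm I A S) j k"
    unfolding ct by (simp add: mm_def)
  also have "\<dots> = mm I S (mm I (mm I ?cA A) S) j k" by (simp add: mm_assoc[OF fin])
  also have "\<dots> = mm I S (mm I ?M S) j k"
    by (rule mm_cong refl)+ (use AA in \<open>auto simp: mm_def\<close>)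
  also have "\<dots> = mm I (mm I S ?M) S j k" by (simp add: mm_assoc[OF fin])
  also have "\<dots> = idm j k" by (rule S_main[OF jk])
  finally show ?thesis .
qed

end

lemma bij_shift: "bij_betw (\<lambda>i::nat. int i - int N) {0..<2*N+1} {-int N..int N}"
proof (rule bij_betw_imageI)
  show "inj_on (\<lambda>i::nat. int i - int N) {0..<2*N+1}" by (auto simp: inj_on_def)
  show "(\<lambda>i::nat. int i - int N) ` {0..<2*N+1} = {-int N..int N}"
  proof
    show "(\<lambda>i::nat. int i - int N) ` {0..<2*N+1} \<subseteq> {-int N..int N}" by auto
    show "{-int N..int N} \<subseteq> (\<lambda>i::nat. int i - int N) ` {0..<2*N+1}"
    proof
      fix x assume "x \<in> {-int N..int N}"
      hence "x = int (nat (x + int N)) - int N" "nat (x + int N) \<in> {0..<2*N+1}" by auto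
      thus "x \<in> (\<lambda>i::nat. int i - int N) ` {0..<2*N+1}" by blast
    qed
  qed
qed

lemma sum_shift: "(\<Sum>l\<in>{0..<2*N+1}. g (int l - int N)) = (\<Sum>m\<in>{-int N..int N}. g m)"
  using sum.reindex_bij_betw[OF bij_shift, of g N] by simp

lemma coisom:
  fixes U :: "int \<Rightarrow> int \<Rightarrow> complex"
  assumes iso: "\<And>j k. j \<in> {-int N..int N} \<Longrightarrow> k \<in> {-int N..int N} \<Longrightarrow>
     (\<Sum>l\<in>{-int N..int N}. cnj (U l j) * U l k) = (if j = k then 1 else 0)"
    and jk: "j \<in> {-int N..int N}" "k \<in> {-int N..int N}"
  shows "(\<Sum>l\<in>{-int N..int N}. U j l * cnj (U k l)) = (if j = k then 1 else 0)"
proof -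
  define n where "n = 2*N+1"
  define f where "f = (\<lambda>i::nat. int i - int N)"
  define Um where "Um = mat n n (\<lambda>(i,k). U (f i) (f k))"
  define Vm where "Vm = mat n n (\<lambda>(i,k). cnj (U (f k) (f i)))"
  have fI: "i < n \<Longrightarrow> f i \<in> {-int N..int N}" for i unfolding f_def n_def by auto
  have finj: "i < n \<Longrightarrow> k < n \<Longrightarrow> (f i = f k) = (i = k)" for i k unfolding f_def by auto
  have Um: "Um \<in> carrier_mat n n" and Vm: "Vm \<in> carrier_mat n n" unfolding Um_def Vm_def by auto
  have "Vm * Um = 1\<^sub>m n"
  proof (rule eq_matI)
    fix i k assume ik: "i < dim_row (1\<^sub>m n)" "k < dim_col (1\<^sub>m n)"
    hence ik': "i < n" "k < n" by auto
    have "(Vm * Um) $$ (i, k) = (\<Sum>l\<in>{0..<n}. cnj (U (f l) (f i)) * U (f l) (f k))"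
      using ik' unfolding Um_def Vm_def by (simp add: scalar_prod_def)
    also have "\<dots> = (\<Sum>m\<in>{-int N..int N}. cnj (U m (f i)) * U m (f k))"
      unfolding n_def f_def by (rule sum_shift)
    also have "\<dots> = (if i = k then 1 else 0)" using iso[OF fI fI] ik' finj by simp
    finally show "(Vm * Um) $$ (i, k) = 1\<^sub>m n $$ (i, k)" using ik' by simp
  qed (auto simp: Um_def Vm_def)
  hence UV: "Um * Vm = 1\<^sub>m n" by (rule mat_mult_left_right_inverse[OF Vm Um])
  define a where "a = nat (j + int N)"
  define b where "b = nat (k + int N)"
  have ab: "a < n" "b < n" "f a = j" "f b = k" using jk unfolding a_def b_def n_def f_def by auto
  have "(Um * Vm) $$ (a, b) = (\<Sum>l\<in>{0..<n}. U (f a) (f l) * cnj (U (f b) (f l)))"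
    using ab unfolding Um_def Vm_def by (simp add: scalar_prod_def)
  also have "\<dots> = (\<Sum>l\<in>{-int N..int N}. U j l * cnj (U k l))"
    unfolding n_def f_def using sum_shift[of "\<lambda>l. U j l * cnj (U k l)" N] ab(3,4) by (simp add: f_def)
  moreover have "(a = b) = (j = k)" using finj[OF ab(1) ab(2)] ab(3,4) by simp
  ultimately show ?thesis using UV ab by simp
qed

lemma jbr_ge1: "jbr k \<ge> 1" by (simp add: jbr_def)
lemma jbr_pos: "jbr k > 0" by (simp add: jbr_def)
lemma jbr_minus: "jbr (-k) = jbr k" by (simp add: jbr_def)
lemma jbr_add: "jbr (a + b) \<le> jbr a * jbr b"
proof -
  have "\<bar>a + b\<bar> \<le> \<bar>a\<bar> + \<bar>b\<bar>" by (rule abs_triangle_ineq)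
  hence "real_of_int \<bar>a + b\<bar> \<le> real_of_int \<bar>a\<bar> + real_of_int \<bar>b\<bar>" by linarith
  moreover have "0 \<le> real_of_int \<bar>a\<bar> * real_of_int \<bar>b\<bar>" by simp
  ultimately have "real_of_int \<bar>a + b\<bar> + 1 \<le> (real_of_int \<bar>a\<bar> + 1) * (real_of_int \<bar>b\<bar> + 1)"
    by (simp only: algebra_simps)
  thus ?thesis unfolding jbr_def by simp
qed
lemma jbr_sub: "jbr (a - b) \<le> jbr a * jbr b"
  using jbr_add[of a "-b"] by (simp add: jbr_minus)

lemma summable_jbr: assumes "p > 1" shows "(\<lambda>m. jbr m powr (-p)) summable_on UNIV"
proof -
  define h where "h = (\<lambda>n::nat. (real n + 1) powr (-p))"
  have "summable (\<lambda>n::nat. real n powr (-p))" using assms by (simp add: summable_real_powr_iff)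
  hence "summable (\<lambda>n::nat. real (Suc n) powr (-p))" by (subst summable_Suc_iff)
  hence "summable h" unfolding h_def by (simp add: add.commute)
  hence hs: "h summable_on UNIV" by (rule summable_nonneg_imp_summable_on) (simp add: h_def)
  have 1: "(\<lambda>m. jbr m powr (-p)) summable_on (range int)"
    by (subst summable_on_reindex) (use hs in \<open>auto simp: o_def h_def jbr_def add.commute\<close>)
  have 2: "(\<lambda>m. jbr m powr (-p)) summable_on (range (\<lambda>n::nat. - int n))"
    by (subst summable_on_reindex) (use hs in \<open>auto simp: o_def h_def jbr_def add.commute inj_on_def\<close>)
  have mem: "x \<in> range int \<union> range (\<lambda>n::nat. - int n)" for x :: int
  proof (cases "x \<ge> 0")
    case True then show ?thesis by (metis UnI1 nonneg_int_cases rangeI)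
  next
    case False then have "x = - int (nat (-x))" by simp
    then show ?thesis by blast
  qed
  have "range int \<union> range (\<lambda>n::nat. - int n) = UNIV" using mem by blast
  then show ?thesis using summable_on_union[OF 1 2] by simp
qed

definition wt :: "real \<Rightarrow> real \<Rightarrow> int \<Rightarrow> int \<Rightarrow> real" where
  "wt \<beta> \<alpha> j k = exp (- \<beta> * \<bar>real_of_int (j - k)\<bar>) / (jbr j * jbr k * jbr (j - k) powr (\<alpha> - 1))"

lemma jbr_ne0: "jbr k \<noteq> 0" using jbr_pos[of k] by simp

lemma den_pos: "0 < jbr j * jbr k * jbr (j - k) powr q"
  using jbr_pos jbr_ne0 by (intro mult_pos_pos) auto

lemma wt_nn: "0 \<le> wt \<beta> \<alpha> j k"
  unfolding wt_def using den_pos by (intro divide_nonneg_pos) auto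

lemma wt_le1: assumes "\<beta> \<ge> 0" "\<alpha> \<ge> 1" shows "wt \<beta> \<alpha> j k \<le> 1"
proof -
  have "exp (- \<beta> * \<bar>real_of_int (j - k)\<bar>) \<le> 1" using assms by simp
  moreover have "1 \<le> jbr j * jbr k * jbr (j - k) powr (\<alpha> - 1)"
  proof -
    have a: "1 \<le> jbr (j - k) powr (\<alpha> - 1)" using jbr_ge1 assms by (intro ge_one_powr_ge_zero) auto
    have "(1::real) * 1 \<le> jbr j * jbr k" by (rule mult_mono) (use jbr_ge1[of j] jbr_ge1[of k] in auto)
    hence b: "1 \<le> jbr j * jbr k" by simp
    have "(1::real) * 1 \<le> (jbr j * jbr k) * jbr (j - k) powr (\<alpha> - 1)"
      by (rule mult_mono[OF b a]) (use jbr_pos[of j] jbr_pos[of k] in auto)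
    thus ?thesis by simp
  qed
  ultimately have "exp (- \<beta> * \<bar>real_of_int (j - k)\<bar>) / (jbr j * jbr k * jbr (j - k) powr (\<alpha> - 1)) \<le> 1 / 1"
    by (intro frac_le) auto
  thus ?thesis unfolding wt_def by simp
qed

lemma exp_tri: assumes "\<beta> \<ge> 0"
  shows "exp (- \<beta> * \<bar>real_of_int (j - l)\<bar>) * exp (- \<beta> * \<bar>real_of_int (l - k)\<bar>) \<le> exp (- \<beta> * \<bar>real_of_int (j - k)\<bar>)"
proof -
  have "\<bar>real_of_int (j - k)\<bar> \<le> \<bar>real_of_int (j - l)\<bar> + \<bar>real_of_int (l - k)\<bar>" by linarith
  hence "\<beta> * \<bar>real_of_int (j - k)\<bar> \<le> \<beta> * (\<bar>real_of_int (j - l)\<bar> + \<bar>real_of_int (l - k)\<bar>)"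
    by (rule mult_left_mono[OF _ assms])
  thus ?thesis by (simp add: exp_add[symmetric] algebra_simps)
qed

lemma powr_split: assumes "q \<ge> 0"
  shows "jbr (j - k) powr q \<le> jbr (j - l) powr q * jbr (l - k) powr q"
proof -
  have "jbr (j - k) \<le> jbr (j - l) * jbr (l - k)" using jbr_add[of "j - l" "l - k"] by simp
  hence "jbr (j - k) powr q \<le> (jbr (j - l) * jbr (l - k)) powr q"
    using assms jbr_pos by (intro powr_mono2) (auto intro: less_imp_le)
  thus ?thesis using jbr_pos by (simp add: powr_mult less_imp_le)
qed

lemma jbr_powr_m2: "jbr l powr (-2) = 1 / jbr l ^ 2"
  using jbr_pos[of l] by (simp add: powr_minus powr_realpow divide_inverse)

lemma wt_prod_term: assumes "\<beta> \<ge> 0" "\<alpha> \<ge> 1"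
  shows "wt \<beta> \<alpha> j l * wt \<beta> \<alpha> l k \<le> wt \<beta> \<alpha> j k * jbr l powr (-2)"
proof -
  let ?q = "\<alpha> - 1"
  define e1 where "e1 = exp (- \<beta> * \<bar>real_of_int (j - l)\<bar>)"
  define e2 where "e2 = exp (- \<beta> * \<bar>real_of_int (l - k)\<bar>)"
  define e where "e = exp (- \<beta> * \<bar>real_of_int (j - k)\<bar>)"
  define a where "a = jbr (j - l) powr ?q"
  define b where "b = jbr (l - k) powr ?q"
  define c where "c = jbr (j - k) powr ?q"
  have pos: "a > 0" "b > 0" "c > 0" "jbr j > 0" "jbr k > 0" "jbr l > 0" unfolding a_def b_def c_def using jbr_pos jbr_ne0 by auto
  have ee: "e1 * e2 \<le> e" unfolding e1_def e2_def e_def by (rule exp_tri[OF assms(1)])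
  have e0: "0 < e" unfolding e_def by simp
  have cab: "c \<le> a * b" unfolding a_def b_def c_def using powr_split assms by simp
  have "wt \<beta> \<alpha> j l * wt \<beta> \<alpha> l k = (e1 * e2) / ((jbr j * jbr k * (jbr l)^2) * (a * b))"
    unfolding wt_def e1_def e2_def a_def b_def by (simp add: power2_eq_square mult_ac)
  also have "\<dots> \<le> e / ((jbr j * jbr k * (jbr l)^2) * c)"
    using pos ee cab e0 by (intro frac_le mult_left_mono mult_pos_pos) auto
  also have "\<dots> = wt \<beta> \<alpha> j k * jbr l powr (-2)"
    unfolding wt_def e_def c_def jbr_powr_m2 by (simp add: mult_ac)
  finally show ?thesis .
qed

lemma finite_sum_le_infsum:
  fixes f :: "'a \<Rightarrow> real"
  assumes "f summable_on UNIV" "\<And>x. 0 \<le> f x" "finite L"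
  shows "sum f L \<le> infsum f UNIV"
proof -
  have "infsum f L \<le> infsum f UNIV"
    by (rule infsum_mono_neutral) (use assms in \<open>auto intro: summable_on_finite\<close>)
  thus ?thesis using assms(3) by simp
qed

definition Kc :: real where "Kc = infsum (\<lambda>l::int. jbr l powr (-2)) UNIV"

lemma Kc_ge1: "1 \<le> Kc"
proof -
  have "sum (\<lambda>l::int. jbr l powr (-2)) {0} \<le> Kc"
    unfolding Kc_def by (rule finite_sum_le_infsum) (use summable_jbr[of 2] in auto)
  thus ?thesis by (simp add: jbr_def)
qed

lemma wt_prod: assumes "\<beta> \<ge> 0" "\<alpha> \<ge> 1" "finite L"
  shows "(\<Sum>l\<in>L. wt \<beta> \<alpha> j l * wt \<beta> \<alpha> l k) \<le> Kc * wt \<beta> \<alpha> j k"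
proof -
  have "(\<Sum>l\<in>L. wt \<beta> \<alpha> j l * wt \<beta> \<alpha> l k) \<le> (\<Sum>l\<in>L. wt \<beta> \<alpha> j k * jbr l powr (-2))"
    by (intro sum_mono wt_prod_term assms)
  also have "\<dots> = wt \<beta> \<alpha> j k * (\<Sum>l\<in>L. jbr l powr (-2))" by (simp add: sum_distrib_left)
  also have "\<dots> \<le> wt \<beta> \<alpha> j k * Kc"
    unfolding Kc_def using summable_jbr[of 2] assms(3)
    by (intro mult_left_mono finite_sum_le_infsum wt_nn) auto
  finally show ?thesis by (simp add: mult.commute)
qed

definition Zq :: "real \<Rightarrow> real" where "Zq q = infsum (\<lambda>m::int. jbr m powr (-q)) UNIV"

lemma shift_summ: assumes "q > 1"
  shows "(\<lambda>l. jbr (l - j) powr (-q)) summable_on UNIV" "infsum (\<lambda>l. jbr (l - j) powr (-q)) UNIV = Zq q"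
proof -
  let ?h = "\<lambda>l::int. l - j"
  let ?g = "\<lambda>m. jbr m powr (-q)"
  have inj: "inj_on ?h UNIV" by (auto simp: inj_on_def)
  have im: "?h ` UNIV = UNIV" by (auto intro!: image_eqI[of _ _ "_ + j"])
  show "(\<lambda>l. jbr (l - j) powr (-q)) summable_on UNIV"
    using summable_on_reindex[OF inj, of ?g] summable_jbr[OF assms] im by (simp add: o_def)
  show "infsum (\<lambda>l. jbr (l - j) powr (-q)) UNIV = Zq q"
    using infsum_reindex[OF inj, of ?g] im by (simp add: o_def Zq_def)
qed

lemma cab_bound: assumes "q \<ge> 0"
  shows "jbr (j - k) powr q \<le> 2 powr q * (jbr (l - j) powr q + jbr (l - k) powr q)"
proof -
  have le: "jbr (j - k) \<le> jbr (l - j) + jbr (l - k)" unfolding jbr_def by linarith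
  show ?thesis
  proof (cases "jbr (l - j) \<le> jbr (l - k)")
    case True
    hence "jbr (j - k) \<le> 2 * jbr (l - k)" using le by simp
    hence "jbr (j - k) powr q \<le> (2 * jbr (l - k)) powr q"
      using assms jbr_pos by (intro powr_mono2) (auto intro: less_imp_le)
    also have "\<dots> = 2 powr q * jbr (l - k) powr q" using jbr_pos by (simp add: powr_mult less_imp_le)
    also have "\<dots> \<le> 2 powr q * (jbr (l - j) powr q + jbr (l - k) powr q)" by simp
    finally show ?thesis .
  next
    case False
    hence "jbr (j - k) \<le> 2 * jbr (l - j)" using le by simp
    hence "jbr (j - k) powr q \<le> (2 * jbr (l - j)) powr q"
      using assms jbr_pos by (intro powr_mono2) (auto intro: less_imp_le)
    also have "\<dots> = 2 powr q * jbr (l - j) powr q" using jbr_pos by (simp add: powr_mult less_imp_le)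
    also have "\<dots> \<le> 2 powr q * (jbr (l - j) powr q + jbr (l - k) powr q)" by simp
    finally show ?thesis .
  qed
qed

lemma tail_term: assumes "\<beta> \<ge> 0" "\<alpha> \<ge> 1" "l \<notin> {-int N..int N}"
  shows "wt \<beta> \<alpha> l j * wt \<beta> \<alpha> l k
     \<le> (2 powr (\<alpha> - 1) / (real N + 1)^2) * wt \<beta> \<alpha> j k * (jbr (l - j) powr (-(\<alpha>-1)) + jbr (l - k) powr (-(\<alpha>-1)))"
proof -
  define q where "q = \<alpha> - 1"
  have q0: "q \<ge> 0" using assms unfolding q_def by simp
  define e1 where "e1 = exp (- \<beta> * \<bar>real_of_int (l - j)\<bar>)"
  define e2 where "e2 = exp (- \<beta> * \<bar>real_of_int (l - k)\<bar>)"
  define e where "e = exp (- \<beta> * \<bar>real_of_int (j - k)\<bar>)"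
  define A where "A = jbr (l - j) powr q"
  define B where "B = jbr (l - k) powr q"
  define C where "C = jbr (j - k) powr q"
  define L where "L = jbr l"
  define M where "M = real N + 1"
  have pos: "A > 0" "B > 0" "C > 0" "jbr j > 0" "jbr k > 0" "L > 0" "M > 0" "e > 0"
    unfolding A_def B_def C_def L_def M_def e_def using jbr_pos jbr_ne0 by auto
  have ee: "e1 * e2 \<le> e" unfolding e1_def e2_def e_def
    using exp_tri[OF assms(1), of j l k] by (simp add: abs_minus_commute)
  have LM: "M \<le> L" unfolding L_def M_def jbr_def using assms(3) by auto
  hence LM2: "M^2 \<le> L^2" using pos by (intro power_mono) auto
  have C2: "C \<le> 2 powr q * (A + B)" unfolding A_def B_def C_def by (rule cab_bound[OF q0])
  define X where "X = M^2 * jbr j * jbr k * A * B"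
  have X0: "X > 0" unfolding X_def using pos by simp
  have "wt \<beta> \<alpha> l j * wt \<beta> \<alpha> l k = (e1 * e2) / (L^2 * jbr j * jbr k * A * B)"
    unfolding wt_def e1_def e2_def A_def B_def L_def q_def by (simp add: power2_eq_square mult_ac)
  also have "\<dots> \<le> e / X"
    unfolding X_def using pos ee LM2 by (intro frac_le mult_right_mono) auto
  also have "\<dots> = (e / X) * 1" by simp
  also have "\<dots> \<le> (e / X) * (2 powr q * (A + B) / C)"
    using C2 pos X0 by (intro mult_left_mono) (auto simp: le_divide_eq_1)
  also have "\<dots> = (2 powr q / M^2) * (e / (jbr j * jbr k * C)) * (1 / A + 1 / B)"
    unfolding X_def using pos by (simp add: field_simps)
  also have "\<dots> = (2 powr (\<alpha> - 1) / (real N + 1)^2) * wt \<beta> \<alpha> j k * (jbr (l - j) powr (-(\<alpha>-1)) + jbr (l - k) powr (-(\<alpha>-1)))"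
    unfolding wt_def e_def C_def A_def B_def M_def q_def powr_minus_divide by simp
  finally show ?thesis .
qed

lemma tail: assumes "\<beta> \<ge> 0" "\<alpha> > 2"
  shows "(\<lambda>l. wt \<beta> \<alpha> l j * wt \<beta> \<alpha> l k) summable_on (-{-int N..int N})"
    "infsum (\<lambda>l. wt \<beta> \<alpha> l j * wt \<beta> \<alpha> l k) (-{-int N..int N})
       \<le> (2 powr (\<alpha> - 1) * 2 * Zq (\<alpha> - 1) / (real N + 1)^2) * wt \<beta> \<alpha> j k"
proof -
  define R where "R = (\<lambda>l. (2 powr (\<alpha> - 1) / (real N + 1)^2) * wt \<beta> \<alpha> j k * (jbr (l - j) powr (-(\<alpha>-1)) + jbr (l - k) powr (-(\<alpha>-1))))"
  have q1: "\<alpha> - 1 > 1" using assms by simp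
  have Rs: "R summable_on UNIV" unfolding R_def
    by (intro summable_on_cmult_right summable_on_add shift_summ(1)[OF q1])
  have RI: "infsum R UNIV = (2 powr (\<alpha> - 1) * 2 * Zq (\<alpha> - 1) / (real N + 1)^2) * wt \<beta> \<alpha> j k"
  proof -
    have "infsum (\<lambda>l. jbr (l - j) powr (-(\<alpha>-1)) + jbr (l - k) powr (-(\<alpha>-1))) UNIV = Zq (\<alpha> - 1) + Zq (\<alpha> - 1)"
      using infsum_add[OF shift_summ(1)[OF q1, of j] shift_summ(1)[OF q1, of k]] shift_summ(2)[OF q1, of j] shift_summ(2)[OF q1, of k]
      by simp
    thus ?thesis unfolding R_def infsum_cmult_right' by (simp add: field_simps)
  qed
  have le: "wt \<beta> \<alpha> l j * wt \<beta> \<alpha> l k \<le> R l" if "l \<in> -{-int N..int N}" for l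
    unfolding R_def using that assms by (intro tail_term) auto
  have Rnn: "0 \<le> R l" for l unfolding R_def using wt_nn by (intro mult_nonneg_nonneg add_nonneg_nonneg) auto
  show S: "(\<lambda>l. wt \<beta> \<alpha> l j * wt \<beta> \<alpha> l k) summable_on (-{-int N..int N})"
    by (rule summable_on_comparison_test[OF summable_on_subset_banach[OF Rs]]) (use le wt_nn in auto)
  have "infsum (\<lambda>l. wt \<beta> \<alpha> l j * wt \<beta> \<alpha> l k) (-{-int N..int N}) \<le> infsum R UNIV"
    by (rule infsum_mono_neutral[OF S Rs]) (use le Rnn in auto)
  thus "infsum (\<lambda>l. wt \<beta> \<alpha> l j * wt \<beta> \<alpha> l k) (-{-int N..int N})
       \<le> (2 powr (\<alpha> - 1) * 2 * Zq (\<alpha> - 1) / (real N + 1)^2) * wt \<beta> \<alpha> j k" using RI by simp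
qed

lemma anti: assumes "\<beta> \<ge> 0" "\<alpha> \<ge> 1"
  shows "exp (- \<beta> * \<bar>real_of_int (2 * j)\<bar>) * jbr (2 * j) powr (-\<alpha>) * wt \<beta> \<alpha> (-j) k \<le> wt \<beta> \<alpha> j k"
proof -
  define q where "q = \<alpha> - 1"
  have q0: "q \<ge> 0" using assms unfolding q_def by simp
  define e0 where "e0 = exp (- \<beta> * \<bar>real_of_int (2 * j)\<bar>)"
  define e1 where "e1 = exp (- \<beta> * \<bar>real_of_int (-j - k)\<bar>)"
  define e where "e = exp (- \<beta> * \<bar>real_of_int (j - k)\<bar>)"
  define T where "T = jbr (2 * j) powr \<alpha>"
  define D where "D = jbr (-j - k) powr q"
  define C where "C = jbr (j - k) powr q"
  have pos: "T > 0" "D > 0" "C > 0" "jbr j > 0" "jbr k > 0" "e > 0"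
    unfolding T_def D_def C_def e_def using jbr_pos jbr_ne0 by auto
  have ee: "e0 * e1 \<le> e" unfolding e0_def e1_def e_def
    using exp_tri[OF assms(1), of j "-j" k] by (simp add: algebra_simps)
  have "jbr (j - k) \<le> jbr (2 * j) * jbr (-j - k)" using jbr_add[of "2*j" "-j-k"] by simp
  hence "C \<le> (jbr (2 * j) * jbr (-j - k)) powr q" unfolding C_def
    using q0 jbr_pos by (intro powr_mono2) (auto intro: less_imp_le)
  also have "\<dots> = jbr (2 * j) powr q * D" unfolding D_def using jbr_pos by (simp add: powr_mult less_imp_le)
  also have "\<dots> \<le> T * D" unfolding T_def q_def using jbr_ge1 pos
    by (intro mult_right_mono powr_mono) auto
  finally have CTD: "C \<le> T * D" .
  have "exp (- \<beta> * \<bar>real_of_int (2 * j)\<bar>) * jbr (2 * j) powr (-\<alpha>) * wt \<beta> \<alpha> (-j) k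
      = (e0 * e1) / (jbr j * jbr k * (T * D))"
    unfolding wt_def e0_def e1_def T_def D_def q_def using jbr_pos
    by (simp add: jbr_minus powr_minus_divide)
  also have "\<dots> \<le> e / (jbr j * jbr k * C)"
    using pos ee CTD by (intro frac_le mult_left_mono mult_pos_pos) auto
  also have "\<dots> = wt \<beta> \<alpha> j k" unfolding wt_def e_def C_def q_def by simp
  finally show ?thesis .
qed

lemma iso_comb:
  assumes U: "unitary_l2 M" and jk: "j \<noteq> k"
  shows "is_l2 (\<lambda>l. p * M l j + r * M l k) \<and> l2_norm_sq (\<lambda>l. p * M l j + r * M l k) = (cmod p)^2 + (cmod r)^2"
proof -
  define x where "x = (\<lambda>l::int. if l = j then p else if l = k then r else 0)"
  have xs: "((\<lambda>l. (cmod (x l))^2) has_sum ((cmod p)^2 + (cmod r)^2)) UNIV"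
    by (rule has_sum_finite_neutralI[of "{j,k}"]) (use jk in \<open>auto simp: x_def\<close>)
  hence xl2: "is_l2 x" unfolding is_l2_def by (rule has_sum_imp_summable)
  have ma: "mat_apply M x = (\<lambda>l. p * M l j + r * M l k)"
  proof
    fix l
    have "((\<lambda>m. M l m * x m) has_sum (p * M l j + r * M l k)) UNIV"
      by (rule has_sum_finite_neutralI[of "{j,k}"]) (use jk in \<open>auto simp: x_def\<close>)
    thus "mat_apply M x l = p * M l j + r * M l k" unfolding mat_apply_def by (rule infsumI)
  qed
  have "l2_norm_sq x = (cmod p)^2 + (cmod r)^2" unfolding l2_norm_sq_def by (rule infsumI[OF xs])
  thus ?thesis using U xl2 ma unfolding unitary_l2_def by metis
qed

lemma iso_single:
  assumes U: "unitary_l2 M"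
  shows "is_l2 (\<lambda>l. M l j) \<and> l2_norm_sq (\<lambda>l. M l j) = 1"
proof -
  define x where "x = (\<lambda>l::int. if l = j then 1 else 0 :: complex)"
  have xs: "((\<lambda>l. (cmod (x l))^2) has_sum 1) UNIV"
    by (rule has_sum_finite_neutralI[of "{j}"]) (auto simp: x_def)
  hence xl2: "is_l2 x" unfolding is_l2_def by (rule has_sum_imp_summable)
  have ma: "mat_apply M x = (\<lambda>l. M l j)"
  proof
    fix l
    have "((\<lambda>m. M l m * x m) has_sum (M l j)) UNIV"
      by (rule has_sum_finite_neutralI[of "{j}"]) (auto simp: x_def)
    thus "mat_apply M x l = M l j" unfolding mat_apply_def by (rule infsumI)
  qed
  have "l2_norm_sq x = 1" unfolding l2_norm_sq_def by (rule infsumI[OF xs])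
  thus ?thesis using U xl2 ma unfolding unitary_l2_def by metis
qed

lemma has_sum_diff':
  fixes f g :: "'a \<Rightarrow> real"
  assumes "(f has_sum a) A" "(g has_sum b) A"
  shows "((\<lambda>x. f x - g x) has_sum (a - b)) A"
proof -
  have "((\<lambda>x. - g x) has_sum (- b)) A" using assms(2) by (simp add: has_sum_uminus)
  from has_sum_add[OF assms(1) this] show ?thesis by simp
qed

lemma cmod_add_sq: "(cmod (a + b))^2 = (cmod a)^2 + (cmod b)^2 + 2 * Re (cnj a * b)"
  by (simp only: cmod_power2) (simp add: power2_eq_square algebra_simps)

lemma col_orth:
  assumes U: "unitary_l2 M"
  shows "((\<lambda>l. cnj (M l j) * M l k) has_sum (if j = k then 1 else 0)) UNIV"
proof (cases "j = k")
  case True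
  have "((\<lambda>l. (cmod (M l j))^2) has_sum 1) UNIV"
    using iso_single[OF U, of j] unfolding is_l2_def l2_norm_sq_def by (metis has_sum_infsum)
  hence "((\<lambda>l. complex_of_real ((cmod (M l j))^2)) has_sum complex_of_real 1) UNIV"
    by (rule has_sum_of_real)
  moreover have "complex_of_real ((cmod (M l j))^2) = cnj (M l j) * M l j" for l
    by (metis complex_norm_square mult.commute)
  ultimately show ?thesis using True by simp
next
  case False
  let ?u = "\<lambda>l. M l j" and ?v = "\<lambda>l. M l k"
  have su: "(\<lambda>l. (cmod (?u l))^2) summable_on UNIV" "infsum (\<lambda>l. (cmod (?u l))^2) UNIV = 1"
    using iso_single[OF U, of j] unfolding is_l2_def l2_norm_sq_def by auto
  have sv: "(\<lambda>l. (cmod (?v l))^2) summable_on UNIV" "infsum (\<lambda>l. (cmod (?v l))^2) UNIV = 1"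
    using iso_single[OF U, of k] unfolding is_l2_def l2_norm_sq_def by auto
  have key: "((\<lambda>l. Re (cnj (?u l) * (c * ?v l))) has_sum 0) UNIV"
    if c: "cmod c = 1" for c
  proof -
    have sc: "((\<lambda>l. (cmod (?u l + c * ?v l))^2) has_sum 2) UNIV"
      using iso_comb[OF U False, of 1 c] c unfolding is_l2_def l2_norm_sq_def by (auto dest: has_sum_infsum)
    have hu: "((\<lambda>l. (cmod (?u l))^2) has_sum 1) UNIV" using su by (metis has_sum_infsum)
    have hv: "((\<lambda>l. (cmod (?v l))^2) has_sum 1) UNIV" using sv by (metis has_sum_infsum)
    have eq: "Re (cnj (?u l) * (c * ?v l)) = ((cmod (?u l + c * ?v l))^2 - (cmod (?u l))^2 - (cmod (?v l))^2) / 2" for l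
      using cmod_add_sq[of "?u l" "c * ?v l"] c by (simp add: norm_mult)
    have "((\<lambda>l. ((cmod (?u l + c * ?v l))^2 - (cmod (?u l))^2 - (cmod (?v l))^2) / 2) has_sum ((2 - 1 - 1) / 2)) UNIV"
      by (intro has_sum_divide_const has_sum_diff' sc hu hv)
    thus ?thesis unfolding eq by simp
  qed
  have kr0: "((\<lambda>l. Re (cnj (?u l) * ?v l)) has_sum 0) UNIV" using key[of 1] by simp
  have kr: "infsum (\<lambda>l. Re (cnj (?u l) * ?v l)) UNIV = 0" by (rule infsumI[OF kr0])
  have ki: "infsum (\<lambda>l. Im (cnj (?u l) * ?v l)) UNIV = 0"
  proof -
    have "((\<lambda>l. Re (cnj (?u l) * (\<i> * ?v l))) has_sum 0) UNIV" using key[of \<i>] by simp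
    moreover have "Re (cnj (?u l) * (\<i> * ?v l)) = - Im (cnj (?u l) * ?v l)" for l by simp
    ultimately have "((\<lambda>l. - Im (cnj (?u l) * ?v l)) has_sum 0) UNIV" by simp
    hence "((\<lambda>l. Im (cnj (?u l) * ?v l)) has_sum - 0) UNIV"
      by (simp only: has_sum_uminus[where f="\<lambda>l. Im (cnj (?u l) * ?v l)" and a=0, symmetric])
    from infsumI[OF this] show ?thesis by simp
  qed
  have sg: "(\<lambda>l. cnj (?u l) * ?v l) summable_on UNIV"
    unfolding summable_on_iff_abs_summable_on_complex
  proof (rule summable_on_comparison_test)
    show "(\<lambda>l. (cmod (?u l))^2 + (cmod (?v l))^2) summable_on UNIV" by (rule summable_on_add[OF su(1) sv(1)])
    show "norm (cnj (?u l) * ?v l) \<le> (cmod (?u l))^2 + (cmod (?v l))^2" for l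
    proof -
      have "2 * (cmod (?u l) * cmod (?v l)) \<le> (cmod (?u l))^2 + (cmod (?v l))^2"
      proof -
        have "0 \<le> (cmod (?u l) - cmod (?v l))^2" by simp
        moreover have "(cmod (?u l) - cmod (?v l))^2 = (cmod (?u l))^2 + (cmod (?v l))^2 - 2 * (cmod (?u l) * cmod (?v l))"
          by (simp add: power2_diff)
        ultimately show ?thesis by linarith
      qed
      moreover have "0 \<le> cmod (?u l) * cmod (?v l)" by simp
      ultimately show ?thesis unfolding norm_mult complex_mod_cnj by linarith
    qed
  qed auto
  have r0: "Re (infsum (\<lambda>l. cnj (?u l) * ?v l) UNIV) = 0" using infsum_Re[OF sg] kr by simp
  have i0: "Im (infsum (\<lambda>l. cnj (?u l) * ?v l) UNIV) = 0" using infsum_Im[OF sg] ki by simp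
  have "infsum (\<lambda>l. cnj (?u l) * ?v l) UNIV = 0" using r0 i0 by (simp add: complex_eq_iff)
  thus ?thesis using has_sum_infsum[OF sg] False by simp
qed

definition CEc :: "real \<Rightarrow> real" where "CEc \<alpha> = 2 powr (\<alpha> - 1) * 2 * Zq (\<alpha> - 1)"

lemma Zq_nn: "0 \<le> Zq q" unfolding Zq_def by (rule infsum_nonneg) simp

lemma CEc_nn: "0 \<le> CEc \<alpha>" unfolding CEc_def using Zq_nn by simp

lemma cm_exp: "cmod (exp (- \<i> * complex_of_real y)) = 1"
proof -
  have "exp (- \<i> * complex_of_real y) = exp (\<i> * complex_of_real (- y))" by simp
  thus ?thesis by (simp only: norm_exp_i_times)
qed

lemma int_bound:
  assumes "f integrable_on {0..2*pi}" "\<And>t. cmod (f t) \<le> B"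
  shows "cmod (integral {0..2*pi} f) \<le> 2 * pi * B"
proof -
  have B0: "0 \<le> B" using assms(2)[of 0] norm_ge_zero order_trans by blast
  have "(f has_integral integral {0..2*pi} f) (cbox 0 (2*pi))"
    using assms(1) by (simp add: has_integral_integral)
  from has_integral_bound[OF B0 this] assms(2)
  show ?thesis by (simp add: content_real mult.commute)
qed

lemma alg:
  fixes c2 CE M e jj kk qq h cv c K :: real
  assumes "jj \<noteq> 0" "kk \<noteq> 0" "qq \<noteq> 0" "M \<noteq> 0" "h \<noteq> 0"
  shows "2 * (c2 * CE / M) * (e / (jj * kk * qq)) + (2 * pi * cv / h) * (2 * (c2 * CE / M)) * (e / (jj * kk * qq))
     + (2 * (c2 * CE / M) * c) * (K * (e / (jj * kk * qq)))
     = (2 * c2 * CE * (1 + 2 * pi * cv / h + c * K)) * e / (jj * kk * M * qq)"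
  using assms by (simp add: field_simps)

lemma main_fixed:
  fixes h \<alpha> c c_v \<beta> :: real and v :: "int \<Rightarrow> real \<Rightarrow> complex" and Nm :: "int \<Rightarrow> int \<Rightarrow> complex" and N :: nat
  assumes h: "h > 0" and \<alpha>: "\<alpha> > 2" and c: "c > 0" and \<beta>: "\<beta> \<ge> 0"
    and vint: "\<forall>k. v k integrable_on {0..2 * pi}"
    and vb: "\<forall>k t. cmod (v k t) \<le> c_v * exp (- \<beta> * \<bar>real_of_int k\<bar>) * jbr k powr (- \<alpha>)"
    and UN: "unitary_l2 Nm"
    and H: "\<forall>j k. cmod (Nm j k
              - (if j = k then exp (- \<i> * of_real (2 * pi * (of_int k)\<^sup>2 / h)) else 0)
              - (if - j = k then exp (- \<i> * of_real (2 * pi * (of_int k)\<^sup>2 / h)) / (\<i> * of_real h)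
                                 * integral {0..2 * pi} (v (- 2 * k)) else 0))
            \<le> c * exp (- \<beta> * \<bar>real_of_int (j - k)\<bar>) / (jbr j * jbr k * jbr (j - k) powr (\<alpha> - 1))"
    and Nbig: "2 * Kc * c^2 * CEc \<alpha> \<le> real N + 1"
  shows "\<exists>U :: int \<Rightarrow> int \<Rightarrow> complex.
          unitary_fin N U \<and>
          (\<forall>j\<in>{-int N..int N}. \<forall>k\<in>{-int N..int N}.
             cmod (U j k - Nm j k)
               \<le> (2 * c^2 * CEc \<alpha> * (1 + 2 * pi * c_v / h + c * Kc)) * exp (- \<beta> * \<bar>real_of_int (j - k)\<bar>)
                 / (jbr j * jbr k * (real N + 1)\<^sup>2 * jbr (j - k) powr (\<alpha> - 1)))"
proof -
  define I where "I = {-int N..int N}"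
  define \<epsilon> where "\<epsilon> = c^2 * CEc \<alpha> / (real N + 1)^2"
  define E where "E = (\<lambda>j k. idm j k - (\<Sum>l\<in>I. cnj (Nm l j) * Nm l k))"
  have finI: "finite I" unfolding I_def by simp
  have \<alpha>1: "\<alpha> \<ge> 1" using \<alpha> by simp
  have Np: "real N + 1 > 0" by simp
  have cv0: "c_v \<ge> 0"
  proof -
    have "0 \<le> c_v * exp (- \<beta> * \<bar>real_of_int 0\<bar>) * jbr 0 powr (- \<alpha>)"
      using vb norm_ge_zero order_trans by blast
    thus ?thesis by (simp add: jbr_def)
  qed
  have eps0: "0 \<le> \<epsilon>" unfolding \<epsilon>_def using CEc_nn by simp
  have epsK: "Kc * \<epsilon> \<le> 1/2"
  proof -
    have "real N + 1 \<le> (real N + 1)^2" by (simp add: power2_eq_square)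
    hence "2 * (Kc * (c^2 * CEc \<alpha>)) \<le> (real N + 1)^2" using Nbig by (simp add: mult_ac)
    hence "Kc * (c^2 * CEc \<alpha>) / (real N + 1)^2 \<le> 1/2" using Np by (simp add: field_simps)
    thus ?thesis unfolding \<epsilon>_def by simp
  qed
  have off: "cmod (Nm l j) \<le> c * wt \<beta> \<alpha> l j" if "l \<notin> I" "j \<in> I" for l j
  proof -
    have "l \<noteq> j" "- l \<noteq> j" using that unfolding I_def by auto
    thus ?thesis using H[rule_format, of l j] by (simp add: wt_def)
  qed
  have Ebd: "cmod (E j k) \<le> \<epsilon> * wt \<beta> \<alpha> j k" if jk: "j \<in> I" "k \<in> I" for j k
  proof -
    let ?f = "\<lambda>l. cnj (Nm l j) * Nm l k"
    have hs: "(?f has_sum idm j k) UNIV" using col_orth[OF UN, of j k] by (simp add: idm_def)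
    have sc: "?f summable_on (-I)" by (rule summable_on_subset_banach[OF has_sum_imp_summable[OF hs]]) simp
    have "(?f has_sum ((\<Sum>l\<in>I. ?f l) + infsum ?f (-I))) (I \<union> -I)"
      by (rule has_sum_Un_disjoint[OF has_sum_finite[OF finI] has_sum_infsum[OF sc]]) auto
    hence "(?f has_sum ((\<Sum>l\<in>I. ?f l) + infsum ?f (-I))) UNIV" by simp
    hence "idm j k = (\<Sum>l\<in>I. ?f l) + infsum ?f (-I)" using hs has_sum_unique by blast
    hence Eeq: "E j k = infsum ?f (-I)" unfolding E_def by simp
    have ts: "(\<lambda>l. wt \<beta> \<alpha> l j * wt \<beta> \<alpha> l k) summable_on (-I)" unfolding I_def by (rule tail(1)[OF \<beta> \<alpha>])
    have ti: "infsum (\<lambda>l. wt \<beta> \<alpha> l j * wt \<beta> \<alpha> l k) (-I) \<le> CEc \<alpha> / (real N + 1)^2 * wt \<beta> \<alpha> j k"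
      unfolding I_def CEc_def by (rule tail(2)[OF \<beta> \<alpha>])
    have sn: "(\<lambda>l. norm (?f l)) summable_on (-I)"
      using summable_on_iff_abs_summable_on_complex[THEN iffD1, OF sc] by simp
    have "cmod (E j k) \<le> infsum (\<lambda>l. norm (?f l)) (-I)"
      unfolding Eeq by (rule norm_infsum_bound) (use sn in simp)
    also have "\<dots> \<le> infsum (\<lambda>l. c^2 * (wt \<beta> \<alpha> l j * wt \<beta> \<alpha> l k)) (-I)"
    proof (rule infsum_mono[OF sn summable_on_cmult_right[OF ts]])
      fix l assume l: "l \<in> -I"
      have "norm (?f l) = cmod (Nm l j) * cmod (Nm l k)" by (simp add: norm_mult)
      also have "\<dots> \<le> (c * wt \<beta> \<alpha> l j) * (c * wt \<beta> \<alpha> l k)"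
        using off[of l j] off[of l k] l jk c wt_nn[of \<beta> \<alpha> l j] by (intro mult_mono) auto
      finally show "norm (?f l) \<le> c^2 * (wt \<beta> \<alpha> l j * wt \<beta> \<alpha> l k)" by (simp add: power2_eq_square mult_ac)
    qed
    also have "\<dots> = c^2 * infsum (\<lambda>l. wt \<beta> \<alpha> l j * wt \<beta> \<alpha> l k) (-I)" by (rule infsum_cmult_right')
    also have "\<dots> \<le> c^2 * (CEc \<alpha> / (real N + 1)^2 * wt \<beta> \<alpha> j k)" by (rule mult_left_mono[OF ti]) simp
    also have "\<dots> = \<epsilon> * wt \<beta> \<alpha> j k" unfolding \<epsilon>_def by simp
    finally show ?thesis .
  qed
  have herm: "cnj (E j k) = E k j" for j k
    unfolding E_def idm_def by (auto simp: mult.commute)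
  interpret co: core I E "wt \<beta> \<alpha>" Kc \<epsilon>
  proof
    show "finite I" by (rule finI)
    show "\<And>j k. cnj (E j k) = E k j" by (rule herm)
    show "\<And>j k. 0 \<le> wt \<beta> \<alpha> j k" by (rule wt_nn)
    show "\<And>j k. wt \<beta> \<alpha> j k \<le> 1" using wt_le1 \<beta> \<alpha>1 by blast
    show "\<And>j k. (\<Sum>l\<in>I. wt \<beta> \<alpha> j l * wt \<beta> \<alpha> l k) \<le> Kc * wt \<beta> \<alpha> j k" using wt_prod \<beta> \<alpha>1 finI by blast
    show "1 \<le> Kc" by (rule Kc_ge1)
    show "0 \<le> \<epsilon>" by (rule eps0)
    show "Kc * \<epsilon> \<le> 1/2" by (rule epsK)
    show "\<And>j k. j \<in> I \<Longrightarrow> k \<in> I \<Longrightarrow> cmod (E j k) \<le> \<epsilon> * wt \<beta> \<alpha> j k" by (rule Ebd)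
  qed
  define U where "U = mm I Nm co.S"
  have iso: "(\<Sum>l\<in>I. cnj (U l j) * U l k) = (if j = k then 1 else 0)" if "j \<in> I" "k \<in> I" for j k
  proof -
    have "(\<Sum>l\<in>I. cnj (U l j) * U l k) = idm j k"
      unfolding U_def by (rule co.U_unit[OF _ that]) (simp add: E_def)
    thus ?thesis by (simp add: idm_def)
  qed
  have coi: "(\<Sum>l\<in>I. U j l * cnj (U k l)) = (if j = k then 1 else 0)" if "j \<in> I" "k \<in> I" for j k
    using coisom[of N U j k] iso that unfolding I_def by blast
  have unit: "unitary_fin N U"
    unfolding unitary_fin_def using iso coi unfolding I_def by blast
  define B0 where "B0 = (\<lambda>j::int. (2 * pi * c_v / h) * exp (- \<beta> * \<bar>real_of_int (2 * j)\<bar>) * jbr (2 * j) powr (-\<alpha>))"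
  have Nmb: "cmod (Nm j l) \<le> (if j = l then 1 else 0) + (if -j = l then B0 j else 0) + c * wt \<beta> \<alpha> j l" for j l
  proof -
    define Dt where "Dt = (if j = l then exp (- \<i> * of_real (2 * pi * (of_int l)\<^sup>2 / h)) else 0)"
    define Jt where "Jt = (if - j = l then exp (- \<i> * of_real (2 * pi * (of_int l)\<^sup>2 / h)) / (\<i> * of_real h)
                                 * integral {0..2 * pi} (v (- 2 * l)) else 0)"
    have R: "cmod (Nm j l - Dt - Jt) \<le> c * wt \<beta> \<alpha> j l"
      using H[rule_format, of j l] unfolding Dt_def Jt_def by (simp add: wt_def)
    have D: "cmod Dt = (if j = l then 1 else 0)" unfolding Dt_def by (simp add: cm_exp)
    have J: "cmod Jt \<le> (if -j = l then B0 j else 0)"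
    proof (cases "-j = l")
      case True
      have ib: "cmod (integral {0..2*pi} (v (2 * j))) \<le> 2 * pi * (c_v * exp (- \<beta> * \<bar>real_of_int (2 * j)\<bar>) * jbr (2 * j) powr (- \<alpha>))"
        by (rule int_bound) (use vint vb[rule_format, of "2 * j"] in auto)
      have "cmod Jt = cmod (integral {0..2*pi} (v (2 * j))) / h"
      proof -
        have l: "l = - j" using True by simp
        show ?thesis unfolding Jt_def l using h by (simp add: norm_mult norm_divide cm_exp)
      qed
      also have "\<dots> \<le> 2 * pi * (c_v * exp (- \<beta> * \<bar>real_of_int (2 * j)\<bar>) * jbr (2 * j) powr (- \<alpha>)) / h"
        using ib h by (simp add: divide_right_mono)
      also have "\<dots> = B0 j" unfolding B0_def by simp
      finally show ?thesis using True by simp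
    qed (simp add: Jt_def)
    have "cmod (Nm j l) \<le> cmod Dt + cmod Jt + cmod (Nm j l - Dt - Jt)"
    proof -
      have "Nm j l = (Dt + Jt) + (Nm j l - Dt - Jt)" by simp
      hence "cmod (Nm j l) \<le> cmod (Dt + Jt) + cmod (Nm j l - Dt - Jt)" by (metis norm_triangle_ineq)
      moreover have "cmod (Dt + Jt) \<le> cmod Dt + cmod Jt" by (rule norm_triangle_ineq)
      ultimately show ?thesis by linarith
    qed
    thus ?thesis using R D J by linarith
  qed
  have bound: "cmod (U j k - Nm j k)
      \<le> (2 * c^2 * CEc \<alpha> * (1 + 2 * pi * c_v / h + c * Kc)) * exp (- \<beta> * \<bar>real_of_int (j - k)\<bar>)
                 / (jbr j * jbr k * (real N + 1)\<^sup>2 * jbr (j - k) powr (\<alpha> - 1))"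
    if jk: "j \<in> I" "k \<in> I" for j k
  proof -
    define X where "X = (\<lambda>l. 2 * \<epsilon> * wt \<beta> \<alpha> l k)"
    have X0: "0 \<le> X l" for l unfolding X_def using eps0 wt_nn by simp
    have mj: "-j \<in> I" using jk unfolding I_def by auto
    have "Nm j k = mm I Nm idm j k" by (rule mm_idm_right[OF jk(2) finI, symmetric])
    hence eq: "U j k - Nm j k = (\<Sum>l\<in>I. Nm j l * (co.S l k - idm l k))"
      by (simp add: U_def mm_def right_diff_distrib sum_subtractf)
    have "cmod (U j k - Nm j k) \<le> (\<Sum>l\<in>I. cmod (Nm j l * (co.S l k - idm l k)))"
      unfolding eq by (rule norm_sum)
    also have "\<dots> \<le> (\<Sum>l\<in>I. ((if j = l then 1 else 0) + (if -j = l then B0 j else 0) + c * wt \<beta> \<alpha> j l) * X l)"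
    proof (rule sum_mono)
      fix l assume l: "l \<in> I"
      have "cmod (Nm j l * (co.S l k - idm l k)) = cmod (Nm j l) * cmod (co.S l k - idm l k)" by (rule norm_mult)
      also have "\<dots> \<le> ((if j = l then 1 else 0) + (if -j = l then B0 j else 0) + c * wt \<beta> \<alpha> j l) * X l"
        unfolding X_def using co.S_bound[OF l jk(2)] Nmb[of j l] order_trans[OF norm_ge_zero Nmb[of j l]]
        by (intro mult_mono) auto
      finally show "cmod (Nm j l * (co.S l k - idm l k)) \<le> ((if j = l then 1 else 0) + (if -j = l then B0 j else 0) + c * wt \<beta> \<alpha> j l) * X l" .
    qed
    also have "\<dots> = (\<Sum>l\<in>I. (if j = l then 1 else 0) * X l) + (\<Sum>l\<in>I. (if -j = l then B0 j else 0) * X l)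
                    + (\<Sum>l\<in>I. (c * wt \<beta> \<alpha> j l) * X l)"
      by (simp only: distrib_right sum.distrib)
    also have "\<dots> = X j + B0 j * X (-j) + (2 * \<epsilon> * c) * (\<Sum>l\<in>I. wt \<beta> \<alpha> j l * wt \<beta> \<alpha> l k)"
    proof -
      have p1: "(\<Sum>l\<in>I. (if j = l then 1 else 0) * X l) = X j"
      proof -
        have "(\<Sum>l\<in>I. (if j = l then 1 else 0) * X l) = (\<Sum>l\<in>I. if j = l then X l else 0)"
          by (rule sum.cong) auto
        thus ?thesis using jk finI by (simp add: sum.delta)
      qed
      have p2: "(\<Sum>l\<in>I. (if -j = l then B0 j else 0) * X l) = B0 j * X (-j)"
      proof -
        have "(\<Sum>l\<in>I. (if -j = l then B0 j else 0) * X l) = (\<Sum>l\<in>I. if -j = l then B0 j * X l else 0)"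
          by (rule sum.cong) auto
        thus ?thesis using mj finI by (simp add: sum.delta)
      qed
      have p3: "(\<Sum>l\<in>I. (c * wt \<beta> \<alpha> j l) * X l) = (2 * \<epsilon> * c) * (\<Sum>l\<in>I. wt \<beta> \<alpha> j l * wt \<beta> \<alpha> l k)"
        unfolding X_def sum_distrib_left by (rule sum.cong) (auto simp: mult_ac)
      show ?thesis using p1 p2 p3 by simp
    qed
    also have "\<dots> \<le> X j + (2 * pi * c_v / h) * (2 * \<epsilon>) * wt \<beta> \<alpha> j k + (2 * \<epsilon> * c) * (Kc * wt \<beta> \<alpha> j k)"
    proof (intro add_mono order_refl mult_left_mono)
      have "B0 j * X (-j) = ((2 * pi * c_v / h) * (2 * \<epsilon>)) * (exp (- \<beta> * \<bar>real_of_int (2 * j)\<bar>) * jbr (2 * j) powr (-\<alpha>) * wt \<beta> \<alpha> (-j) k)"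
        unfolding B0_def X_def by (simp add: mult_ac)
      also have "\<dots> \<le> ((2 * pi * c_v / h) * (2 * \<epsilon>)) * wt \<beta> \<alpha> j k"
        using anti[OF \<beta> \<alpha>1, of j k] cv0 h eps0 by (intro mult_left_mono) auto
      finally show "B0 j * X (-j) \<le> (2 * pi * c_v / h) * (2 * \<epsilon>) * wt \<beta> \<alpha> j k" .
      show "(\<Sum>l\<in>I. wt \<beta> \<alpha> j l * wt \<beta> \<alpha> l k) \<le> Kc * wt \<beta> \<alpha> j k" by (rule wt_prod[OF \<beta> \<alpha>1 finI])
      show "0 \<le> 2 * \<epsilon> * c" using eps0 c by simp
    qed
    also have "\<dots> = (2 * c^2 * CEc \<alpha> * (1 + 2 * pi * c_v / h + c * Kc)) * exp (- \<beta> * \<bar>real_of_int (j - k)\<bar>)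
                 / (jbr j * jbr k * (real N + 1)\<^sup>2 * jbr (j - k) powr (\<alpha> - 1))"
      unfolding X_def \<epsilon>_def wt_def by (rule alg) (use jbr_ne0 h in auto)
    finally show ?thesis .
  qed
  show ?thesis using unit bound unfolding I_def by blast
qed

theorem mainTheorem12:
  fixes h \<alpha> c c_v :: real
  assumes "h > 0" and "\<alpha> > 2" and "c > 0"
  shows "\<exists>c_w::real. \<forall>(\<beta>::real) (v :: int \<Rightarrow> real \<Rightarrow> complex) (Nm :: int \<Rightarrow> int \<Rightarrow> complex).
    (\<beta> \<ge> 0
     \<and> (\<forall>x t. potential v x t \<in> \<real>)
     \<and> (\<forall>x t. potential v x (t + 2 * pi) = potential v x t)
     \<and> (\<forall>t. v 0 t = 0)
     \<and> (\<forall>k. v k integrable_on {0..2 * pi})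
     \<and> (\<forall>k t. cmod (v k t) \<le> c_v * exp (- \<beta> * \<bar>real_of_int k\<bar>) * jbr k powr (- \<alpha>))
     \<and> unitary_l2 Nm
     \<and> (\<forall>j k. cmod (Nm j k
              - (if j = k then exp (- \<i> * of_real (2 * pi * (of_int k)\<^sup>2 / h)) else 0)
              - (if - j = k then exp (- \<i> * of_real (2 * pi * (of_int k)\<^sup>2 / h)) / (\<i> * of_real h)
                                 * integral {0..2 * pi} (v (- 2 * k)) else 0))
            \<le> c * exp (- \<beta> * \<bar>real_of_int (j - k)\<bar>) / (jbr j * jbr k * jbr (j - k) powr (\<alpha> - 1))))
    \<longrightarrow> (\<exists>N0::nat. \<forall>N\<ge>N0. \<exists>U :: int \<Rightarrow> int \<Rightarrow> complex.
          unitary_fin N U \<and>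
          (\<forall>j\<in>{-int N..int N}. \<forall>k\<in>{-int N..int N}.
             cmod (U j k - Nm j k)
               \<le> c_w * exp (- \<beta> * \<bar>real_of_int (j - k)\<bar>)
                 / (jbr j * jbr k * (real N + 1)\<^sup>2 * jbr (j - k) powr (\<alpha> - 1))))"
proof -
  define cw where "cw = 2 * c^2 * CEc \<alpha> * (1 + 2 * pi * c_v / h + c * Kc)"
  show ?thesis
  proof (rule exI[of _ cw], intro allI impI)
    fix \<beta> :: real and v :: "int \<Rightarrow> real \<Rightarrow> complex" and Nm :: "int \<Rightarrow> int \<Rightarrow> complex"
    assume A: "\<beta> \<ge> 0
     \<and> (\<forall>x t. potential v x t \<in> \<real>)
     \<and> (\<forall>x t. potential v x (t + 2 * pi) = potential v x t)
     \<and> (\<forall>t. v 0 t = 0)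
     \<and> (\<forall>k. v k integrable_on {0..2 * pi})
     \<and> (\<forall>k t. cmod (v k t) \<le> c_v * exp (- \<beta> * \<bar>real_of_int k\<bar>) * jbr k powr (- \<alpha>))
     \<and> unitary_l2 Nm
     \<and> (\<forall>j k. cmod (Nm j k
              - (if j = k then exp (- \<i> * of_real (2 * pi * (of_int k)\<^sup>2 / h)) else 0)
              - (if - j = k then exp (- \<i> * of_real (2 * pi * (of_int k)\<^sup>2 / h)) / (\<i> * of_real h)
                                 * integral {0..2 * pi} (v (- 2 * k)) else 0))
            \<le> c * exp (- \<beta> * \<bar>real_of_int (j - k)\<bar>) / (jbr j * jbr k * jbr (j - k) powr (\<alpha> - 1)))"
    show "\<exists>N0::nat. \<forall>N\<ge>N0. \<exists>U :: int \<Rightarrow> int \<Rightarrow> complex.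
          unitary_fin N U \<and>
          (\<forall>j\<in>{-int N..int N}. \<forall>k\<in>{-int N..int N}.
             cmod (U j k - Nm j k)
               \<le> cw * exp (- \<beta> * \<bar>real_of_int (j - k)\<bar>)
                 / (jbr j * jbr k * (real N + 1)\<^sup>2 * jbr (j - k) powr (\<alpha> - 1)))"
    proof (rule exI[of _ "nat \<lceil>2 * Kc * c^2 * CEc \<alpha>\<rceil>"], intro allI impI)
      fix N :: nat assume N: "N \<ge> nat \<lceil>2 * Kc * c^2 * CEc \<alpha>\<rceil>"
      have "2 * Kc * c^2 * CEc \<alpha> \<le> real (nat \<lceil>2 * Kc * c^2 * CEc \<alpha>\<rceil>)" by (rule real_nat_ceiling_ge)
      also have "\<dots> \<le> real N" using N by simp
      finally have Nbig: "2 * Kc * c^2 * CEc \<alpha> \<le> real N + 1" by simp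
      show "\<exists>U :: int \<Rightarrow> int \<Rightarrow> complex.
          unitary_fin N U \<and>
          (\<forall>j\<in>{-int N..int N}. \<forall>k\<in>{-int N..int N}.
             cmod (U j k - Nm j k)
               \<le> cw * exp (- \<beta> * \<bar>real_of_int (j - k)\<bar>)
                 / (jbr j * jbr k * (real N + 1)\<^sup>2 * jbr (j - k) powr (\<alpha> - 1)))"
      proof -
        from A have a1: "\<beta> \<ge> 0" and a5: "\<forall>k. v k integrable_on {0..2 * pi}"
          and a6: "\<forall>k t. cmod (v k t) \<le> c_v * exp (- \<beta> * \<bar>real_of_int k\<bar>) * jbr k powr (- \<alpha>)"
          and a7: "unitary_l2 Nm"
          and a8: "\<forall>j k. cmod (Nm j k
              - (if j = k then exp (- \<i> * of_real (2 * pi * (of_int k)\<^sup>2 / h)) else 0)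
              - (if - j = k then exp (- \<i> * of_real (2 * pi * (of_int k)\<^sup>2 / h)) / (\<i> * of_real h)
                                 * integral {0..2 * pi} (v (- 2 * k)) else 0))
            \<le> c * exp (- \<beta> * \<bar>real_of_int (j - k)\<bar>) / (jbr j * jbr k * jbr (j - k) powr (\<alpha> - 1))"
          by blast+
        show ?thesis unfolding cw_def
          by (rule main_fixed[OF assms(1) assms(2) assms(3) a1 a5 a6 a7 a8 Nbig])
      qed
    qed
  qed
qed

end
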